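(* Let $t\ge1$, let $\mathcal{F},\mathcal{G}\subseteq 2^{[k]}$ be cross $t$-intersecting families and let $1\le i<j\le k$. Suppose that $a$ is the maximal necessary intersection point of $\mathcal{F}$ and $\mathcal{G}$. Then $|[a-1]\cap F\cap G|\ge t-1$ for all $F\in\mathcal{F}$ and $G\in\mathcal{G}$. Moreover, $s_{i,j}(\mathcal{F})$ and $s_{i,j}(\mathcal{G})$ are cross $t$-intersecting and their maximal necessary intersection point is at most $a$.
   Context: Families $\mathcal{F},\mathcal{G}$ are cross $t$-intersecting if $|F\cap G|\ge t$ for all $F\in\mathcal{F},G\in\mathcal{G}$. For cross $t$-intersecting $\mathcal{F},\mathcal{G}\subseteq2^{[k]}$, an element $a\in[k]$ is a necessary intersection point of $\mathcal{F}$ and $\mathcal{G}$ if there exist $F\in\mathcal{F}$, $G\in\mathcal{G}$ with $|[a]\cap F\cap G|=t$ and $a\in F\cap G$; the maximal necessary intersection point is the largest such $a$. For $i<j$, the shifting operator is $s_{i,j}(\mathcal{F})=\{s_{i,j}(F):F\in\mathcal{F}\}$ where $s_{i,j}(F)=(F\setminus\{j\})\cup\{i\}$ if $j\in F$, $i\notin F$ and $(F\setminus\{j\})\cup\{i\}\notin\mathcal{F}$, and $s_{i,j}(F)=F$ otherwise. $[0]=\emptyset$. *)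

theory Defs
  imports Main
begin

text \<open>Ground set [k] = {1..k}; [0] = {}.\<close>

definition cross_t_intersecting :: "nat \<Rightarrow> nat set set \<Rightarrow> nat set set \<Rightarrow> bool" where
  "cross_t_intersecting t \<F> \<G> \<longleftrightarrow> (\<forall>F\<in>\<F>. \<forall>G\<in>\<G>. t \<le> card (F \<inter> G))"

definition necessary_intersection_point ::
  "nat \<Rightarrow> nat \<Rightarrow> nat set set \<Rightarrow> nat set set \<Rightarrow> nat \<Rightarrow> bool" where
  "necessary_intersection_point k t \<F> \<G> a \<longleftrightarrow>
     a \<in> {1..k} \<and> (\<exists>F\<in>\<F>. \<exists>G\<in>\<G>. card ({1..a} \<inter> F \<inter> G) = t \<and> a \<in> F \<inter> G)"

definition max_necessary_intersection_point ::
  "nat \<Rightarrow> nat \<Rightarrow> nat set set \<Rightarrow> nat set set \<Rightarrow> nat \<Rightarrow> bool" where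
  "max_necessary_intersection_point k t \<F> \<G> a \<longleftrightarrow>
     necessary_intersection_point k t \<F> \<G> a \<and>
     (\<forall>b. necessary_intersection_point k t \<F> \<G> b \<longrightarrow> b \<le> a)"

definition shift_set :: "nat \<Rightarrow> nat \<Rightarrow> nat set set \<Rightarrow> nat set \<Rightarrow> nat set" where
  "shift_set i j \<F> F =
     (if j \<in> F \<and> i \<notin> F \<and> insert i (F - {j}) \<notin> \<F> then insert i (F - {j}) else F)"

definition shift_family :: "nat \<Rightarrow> nat \<Rightarrow> nat set set \<Rightarrow> nat set set" where
  "shift_family i j \<F> = shift_set i j \<F> ` \<F>"

end

theory Submission
  imports Defs
begin

lemma card_swap:
  assumes "finite B" "j \<in> X \<Longrightarrow> i \<in> X" "i \<notin> B" "j \<in> B"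
  shows "card (X \<inter> B) \<le> card (X \<inter> insert i (B - {j}))"
proof (cases "j \<in> X")
  case True
  then have i: "i \<in> X" using assms by blast
  have "X \<inter> insert i (B - {j}) = insert i ((X \<inter> B) - {j})" using i by blast
  moreover have "card (insert i ((X \<inter> B) - {j})) = card (X \<inter> B)"
  proof -
    have fin: "finite (X \<inter> B)" using assms by simp
    have jin: "j \<in> X \<inter> B" using assms True by simp
    have "card (insert i ((X \<inter> B) - {j})) = Suc (card ((X \<inter> B) - {j}))"
      using fin assms by (simp add: card_insert_disjoint)
    also have "\<dots> = card (X \<inter> B)" using card_Suc_Diff1[OF fin jin] .
    finally show ?thesis .
  qed
  ultimately show ?thesis by simp
next
  case False
  have "X \<inter> B \<subseteq> X \<inter> insert i (B - {j})" using False by blast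
  then show ?thesis using assms by (intro card_mono) auto
qed

lemma shift_preserve:
  assumes fin: "\<forall>F\<in>\<F>. finite F" "\<forall>G\<in>\<G>. finite G"
    and X: "j \<in> X \<Longrightarrow> i \<in> X"
    and H: "\<forall>F\<in>\<F>. \<forall>G\<in>\<G>. t \<le> card (X \<inter> F \<inter> G)"
    and FG: "F \<in> \<F>" "G \<in> \<G>"
  shows "t \<le> card (X \<inter> shift_set i j \<F> F \<inter> shift_set i j \<G> G)"
proof -
  have fF: "finite F" and fG: "finite G" using fin FG by auto
  have base: "t \<le> card (X \<inter> F \<inter> G)" using H FG by blast
  consider (c1) "j \<in> F \<and> i \<notin> F \<and> insert i (F - {j}) \<notin> \<F>" "j \<in> G \<and> i \<notin> G \<and> insert i (G - {j}) \<notin> \<G>"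
    | (c2) "j \<in> F \<and> i \<notin> F \<and> insert i (F - {j}) \<notin> \<F>" "\<not> (j \<in> G \<and> i \<notin> G \<and> insert i (G - {j}) \<notin> \<G>)"
    | (c3) "\<not> (j \<in> F \<and> i \<notin> F \<and> insert i (F - {j}) \<notin> \<F>)" "j \<in> G \<and> i \<notin> G \<and> insert i (G - {j}) \<notin> \<G>"
    | (c4) "\<not> (j \<in> F \<and> i \<notin> F \<and> insert i (F - {j}) \<notin> \<F>)" "\<not> (j \<in> G \<and> i \<notin> G \<and> insert i (G - {j}) \<notin> \<G>)"
    by blast
  then show ?thesis
  proof cases
    case c1
    have e: "X \<inter> shift_set i j \<F> F \<inter> shift_set i j \<G> G = X \<inter> insert i (F \<inter> G - {j})"
      using c1 by (auto simp: shift_set_def)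
    have "card (X \<inter> (F \<inter> G)) \<le> card (X \<inter> insert i (F \<inter> G - {j}))"
      using c1 fF by (intro card_swap X) auto
    then show ?thesis using base e by (simp add: Int_assoc)
  next
    case c2
    have sG: "shift_set i j \<G> G = G" using c2 by (auto simp: shift_set_def)
    have sF: "shift_set i j \<F> F = insert i (F - {j})" using c2 by (auto simp: shift_set_def)
    show ?thesis
    proof (cases "j \<in> G")
      case False
      have "X \<inter> F \<inter> G \<subseteq> X \<inter> shift_set i j \<F> F \<inter> shift_set i j \<G> G"
        using False sF sG by auto
      moreover have "finite (X \<inter> shift_set i j \<F> F \<inter> shift_set i j \<G> G)" using fG sG by auto
      ultimately show ?thesis using base card_mono le_trans by metis
    next
      case True
      show ?thesis
      proof (cases "i \<in> G")
        case True2: True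
        have e: "X \<inter> shift_set i j \<F> F \<inter> shift_set i j \<G> G = X \<inter> insert i (F \<inter> G - {j})"
          using c2 sF sG True2 by auto
        have "card (X \<inter> (F \<inter> G)) \<le> card (X \<inter> insert i (F \<inter> G - {j}))"
          using c2 fF True by (intro card_swap X) auto
        then show ?thesis using base e by (simp add: Int_assoc)
      next
        case False2: False
        have G2: "insert i (G - {j}) \<in> \<G>" using c2 True False2 by blast
        have e: "X \<inter> shift_set i j \<F> F \<inter> shift_set i j \<G> G = X \<inter> F \<inter> insert i (G - {j})"
          using c2 sF sG False2 by auto
        show ?thesis using H FG G2 e by metis
      qed
    qed
  next
    case c3
    have sF: "shift_set i j \<F> F = F" using c3 by (auto simp: shift_set_def)
    have sG: "shift_set i j \<G> G = insert i (G - {j})" using c3 by (auto simp: shift_set_def)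
    show ?thesis
    proof (cases "j \<in> F")
      case False
      have "X \<inter> F \<inter> G \<subseteq> X \<inter> shift_set i j \<F> F \<inter> shift_set i j \<G> G"
        using False sF sG by auto
      moreover have "finite (X \<inter> shift_set i j \<F> F \<inter> shift_set i j \<G> G)" using fF sF by auto
      ultimately show ?thesis using base card_mono le_trans by metis
    next
      case True
      show ?thesis
      proof (cases "i \<in> F")
        case True2: True
        have e: "X \<inter> shift_set i j \<F> F \<inter> shift_set i j \<G> G = X \<inter> insert i (F \<inter> G - {j})"
          using c3 sF sG True2 by auto
        have "card (X \<inter> (F \<inter> G)) \<le> card (X \<inter> insert i (F \<inter> G - {j}))"
          using c3 fF True by (intro card_swap X) auto
        then show ?thesis using base e by (simp add: Int_assoc)
      next
        case False2: False
        have F2: "insert i (F - {j}) \<in> \<F>" using c3 True False2 by blast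
        have e: "X \<inter> shift_set i j \<F> F \<inter> shift_set i j \<G> G = X \<inter> insert i (F - {j}) \<inter> G"
          using c3 sF sG False2 by auto
        show ?thesis using H FG F2 e by metis
      qed
    qed
  next
    case c4
    have "shift_set i j \<F> F = F" "shift_set i j \<G> G = G" using c4 by (auto simp: shift_set_def)
    then show ?thesis using base by simp
  qed
qed

theorem lemma3p4:
  fixes k t i j a :: nat and \<F> \<G> :: "nat set set"
  assumes "t \<ge> 1"
    and "\<F> \<subseteq> Pow {1..k}" and "\<G> \<subseteq> Pow {1..k}"
    and "cross_t_intersecting t \<F> \<G>"
    and "1 \<le> i" and "i < j" and "j \<le> k"
    and "max_necessary_intersection_point k t \<F> \<G> a"
  shows "(\<forall>F\<in>\<F>. \<forall>G\<in>\<G>. t - 1 \<le> card ({1..a - 1} \<inter> F \<inter> G))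
         \<and> cross_t_intersecting t (shift_family i j \<F>) (shift_family i j \<G>)
         \<and> (\<forall>b. necessary_intersection_point k t (shift_family i j \<F>) (shift_family i j \<G>) b
                  \<longrightarrow> b \<le> a)"
proof -
  have finF: "\<forall>F\<in>\<F>. finite F" using assms(2) by (meson PowD finite_atLeastAtMost finite_subset subsetD)
  have finG: "\<forall>G\<in>\<G>. finite G" using assms(3) by (meson PowD finite_atLeastAtMost finite_subset subsetD)
  have maxa: "\<And>b. necessary_intersection_point k t \<F> \<G> b \<Longrightarrow> b \<le> a"
    using assms(8) by (simp add: max_necessary_intersection_point_def)
  have key: "t \<le> card ({1..a} \<inter> F \<inter> G)" if F: "F \<in> \<F>" and G: "G \<in> \<G>" for F G
  proof -
    define C where "C = F \<inter> G"
    have Ck: "C \<subseteq> {1..k}" using F assms(2) C_def by auto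
    have tC: "t \<le> card C" using assms(4) F G C_def by (simp add: cross_t_intersecting_def)
    have ex: "t \<le> card ({1..k} \<inter> C)" using Ck tC by (simp add: Int_absorb1)
    define b where "b = (LEAST b. t \<le> card ({1..b} \<inter> C))"
    have hb: "t \<le> card ({1..b} \<inter> C)" unfolding b_def by (rule LeastI, rule ex)
    have bk: "b \<le> k" unfolding b_def by (rule Least_le, rule ex)
    have b0: "b \<noteq> 0" using hb assms(1) by (cases b) auto
    have lt: "\<not> t \<le> card ({1..b-1} \<inter> C)"
      using b0 unfolding b_def by (metis b_def diff_less not_less_Least zero_less_iff_neq_zero zero_less_one)
    have sub: "{1..b} \<inter> C \<subseteq> insert b ({1..b-1} \<inter> C)" by auto
    have "card ({1..b} \<inter> C) \<le> Suc (card ({1..b-1} \<inter> C))"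
      using card_mono[OF _ sub] by (simp add: card_insert_if split: if_splits)
    then have eq: "card ({1..b} \<inter> C) = t" using hb lt by linarith
    have bC: "b \<in> C"
    proof (rule ccontr)
      assume "b \<notin> C"
      then have "{1..b} \<inter> C = {1..b-1} \<inter> C" by (auto, metis le_antisym less_Suc_eq_le Suc_pred b0 not_less zero_less_iff_neq_zero)
      then show False using hb lt by simp
    qed
    have "necessary_intersection_point k t \<F> \<G> b"
      unfolding necessary_intersection_point_def using b0 bk F G eq bC C_def by (auto simp: Int_assoc)
    then have "b \<le> a" by (rule maxa)
    then have "{1..b} \<inter> C \<subseteq> {1..a} \<inter> C" by auto
    then have "card ({1..b} \<inter> C) \<le> card ({1..a} \<inter> C)" by (intro card_mono) auto
    then show ?thesis using eq C_def by (simp add: Int_assoc)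
  qed
  have P1: "\<forall>F\<in>\<F>. \<forall>G\<in>\<G>. t - 1 \<le> card ({1..a - 1} \<inter> F \<inter> G)"
  proof (intro ballI)
    fix F G assume F: "F \<in> \<F>" and G: "G \<in> \<G>"
    have sub: "{1..a} \<inter> F \<inter> G \<subseteq> insert a ({1..a-1} \<inter> F \<inter> G)" by auto
    have "card ({1..a} \<inter> F \<inter> G) \<le> Suc (card ({1..a-1} \<inter> F \<inter> G))"
      using card_mono[OF _ sub] by (simp add: card_insert_if split: if_splits)
    then show "t - 1 \<le> card ({1..a - 1} \<inter> F \<inter> G)" using key[OF F G] by linarith
  qed
  have P2: "cross_t_intersecting t (shift_family i j \<F>) (shift_family i j \<G>)"
    unfolding cross_t_intersecting_def shift_family_def
  proof (intro ballI)
    fix F' G' assume "F' \<in> shift_set i j \<F> ` \<F>" "G' \<in> shift_set i j \<G> ` \<G>"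
    then obtain F G where F: "F \<in> \<F>" "F' = shift_set i j \<F> F"
      and G: "G \<in> \<G>" "G' = shift_set i j \<G> G" by blast
    have H: "\<forall>F\<in>\<F>. \<forall>G\<in>\<G>. t \<le> card ({1..k} \<inter> F \<inter> G)"
    proof (intro ballI)
      fix F G assume "F \<in> \<F>" "G \<in> \<G>"
      moreover then have "{1..k} \<inter> F \<inter> G = F \<inter> G" using assms(2) by auto
      ultimately show "t \<le> card ({1..k} \<inter> F \<inter> G)" using assms(4)
        by (simp add: cross_t_intersecting_def)
    qed
    have "t \<le> card ({1..k} \<inter> F' \<inter> G')"
      using shift_preserve[OF finF finG _ H F(1) G(1)] F G assms(5,6) by auto
    moreover have "card ({1..k} \<inter> F' \<inter> G') \<le> card (F' \<inter> G')"
      using F finF by (intro card_mono) (auto simp: shift_set_def)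
    ultimately show "t \<le> card (F' \<inter> G')" by linarith
  qed
  have P3: "\<forall>b. necessary_intersection_point k t (shift_family i j \<F>) (shift_family i j \<G>) b \<longrightarrow> b \<le> a"
  proof (intro allI impI)
    fix b assume "necessary_intersection_point k t (shift_family i j \<F>) (shift_family i j \<G>) b"
    then obtain F G where F: "F \<in> \<F>" and G: "G \<in> \<G>"
      and c: "card ({1..b} \<inter> shift_set i j \<F> F \<inter> shift_set i j \<G> G) = t"
      and bin: "b \<in> shift_set i j \<F> F \<inter> shift_set i j \<G> G"
      unfolding necessary_intersection_point_def shift_family_def by blast
    show "b \<le> a"
    proof (rule ccontr)
      assume "\<not> b \<le> a"
      have H: "\<forall>F\<in>\<F>. \<forall>G\<in>\<G>. t \<le> card ({1..a} \<inter> F \<inter> G)" using key by blast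
      have X: "j \<in> {1..a} \<Longrightarrow> i \<in> {1..a}" using assms(5,6) by auto
      have t1: "t \<le> card ({1..a} \<inter> shift_set i j \<F> F \<inter> shift_set i j \<G> G)"
        by (rule shift_preserve[OF finF finG X H F G])
      have sub: "insert b ({1..a} \<inter> shift_set i j \<F> F \<inter> shift_set i j \<G> G)
          \<subseteq> {1..b} \<inter> shift_set i j \<F> F \<inter> shift_set i j \<G> G"
        using bin \<open>\<not> b \<le> a\<close> by auto
      have "card (insert b ({1..a} \<inter> shift_set i j \<F> F \<inter> shift_set i j \<G> G)) \<le> t"
        using card_mono[OF _ sub] c by simp
      moreover have "b \<notin> {1..a}" using \<open>\<not> b \<le> a\<close> by auto
      moreover have "finite (shift_set i j \<F> F)" using finF F by (simp add: shift_set_def)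
      ultimately have "Suc (card ({1..a} \<inter> shift_set i j \<F> F \<inter> shift_set i j \<G> G)) \<le> t"
      proof -
        have "b \<notin> {1..a} \<inter> shift_set i j \<F> F \<inter> shift_set i j \<G> G" using \<open>\<not> b \<le> a\<close> by auto
        moreover have "finite ({1..a} \<inter> shift_set i j \<F> F \<inter> shift_set i j \<G> G)" by simp
        ultimately show ?thesis using card_insert_disjoint \<open>card (insert b _) \<le> t\<close> by metis
      qed
      then show False using t1 by simp
    qed
  qed
  show ?thesis using P1 P2 P3 by blast
qed

end
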